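(* Let $n_1,n_2\in(0,1)$ with $n_1+n_2=1$ and for $N\ge2$ let $N_1=N_1(N),N_2=N_2(N)\in\mathbb{N}$ with $N_1+N_2=N$ and $|N_1/N-n_1|=O(N^{-1})=|N_2/N-n_2|$ as $N\to\infty$. For each $k\in\mathbb{N}$ there exists $c_k>0$ such that for all $N>k$ $$\mathrm{Tr}\big|\gamma^{(k)}_{\mathrm{spin},N_1,N_2}-\gamma^{(k)}_{\mathrm{spin},\infty}\big|\le\frac{c_k}{N},$$ where $\gamma^{(k)}_{\mathrm{spin},N_1,N_2}$ is the $k$-body marginal of $|e_1^{\otimes N_1}\vee e_2^{\otimes N_2}\rangle\langle e_1^{\otimes N_1}\vee e_2^{\otimes N_2}|$ on $(\mathbb{C}^2)^{\otimes N}$ and $$\gamma^{(k)}_{\mathrm{spin},\infty}:=\sum_{j=0}^k\binom{k}{j}n_1^{k-j}n_2^{j}\,\big|e_1^{\otimes(k-j)}\vee e_2^{\otimes j}\big\rangle\big\langle e_1^{\otimes(k-j)}\vee e_2^{\otimes j}\big|.$$ The trace is taken in $(\mathbb{C}^2)^{\otimes k}$.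
   Context: $e_1=\binom10$, $e_2=\binom01$. For orthonormal $e_1,e_2$, $e_1^{\otimes a}\vee e_2^{\otimes b}$ is the unit vector $\binom{a+b}{a}^{-1/2}$ times the sum of all distinct tensor products of $a$ copies of $e_1$ and $b$ copies of $e_2$. The $k$-body marginal of a density matrix on $(\mathbb{C}^2)^{\otimes N}$ is the partial trace over $N-k$ tensor factors. *)

theory Defs
  imports Complex_Main "Jordan_Normal_Form.Matrix"
begin

text \<open>The space (C^2)^{tensor N} is identified with C^(2^N) via the
  computational basis: the basis tensor w_0 (x) w_1 (x) ... (x) w_{N-1}, each w_m in
  {e_1, e_2}, is the standard unit vector with index sum over m of (if w_m = e_2 then 2^m else 0).
  A word is a bool list of length N, True at position m meaning that the m-th factor is e_2.\<close>

definition word_index :: "bool list \<Rightarrow> nat" where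
  "word_index ws = (\<Sum>m<length ws. if ws ! m then 2 ^ m else 0)"

definition word_vec :: "bool list \<Rightarrow> complex vec" where
  "word_vec ws = unit_vec (2 ^ length ws) (word_index ws)"

text \<open>e_1^{(x) a} v e_2^{(x) b}: binom(a+b,a)^(-1/2) times the sum of all distinct
  tensor products of a copies of e_1 and b copies of e_2 (sum taken entrywise).\<close>
definition sym_vec :: "nat \<Rightarrow> nat \<Rightarrow> complex vec" where
  "sym_vec a b = vec (2 ^ (a + b)) (\<lambda>i.
     complex_of_real (1 / sqrt (real ((a + b) choose a))) *
     (\<Sum>ws\<in>{ws. length ws = a + b \<and> length (filter id ws) = b}. word_vec ws $ i))"

definition ketbra :: "complex vec \<Rightarrow> complex mat" where
  "ketbra v = mat (dim_vec v) (dim_vec v) (\<lambda>(i, j). v $ i * cnj (v $ j))"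

text \<open>Partial trace of an operator on (C^2)^{(x) N} over the last N - k tensor factors,
  giving the k-body marginal (an operator on (C^2)^{(x) k}).\<close>
definition marginal :: "nat \<Rightarrow> nat \<Rightarrow> complex mat \<Rightarrow> complex mat" where
  "marginal N k \<rho> = mat (2 ^ k) (2 ^ k) (\<lambda>(i, j).
     \<Sum>b<2 ^ (N - k). \<rho> $$ (i + 2 ^ k * b, j + 2 ^ k * b))"

definition gamma_spin :: "nat \<Rightarrow> nat \<Rightarrow> nat \<Rightarrow> complex mat" where
  "gamma_spin k N1 N2 = marginal (N1 + N2) k (ketbra (sym_vec N1 N2))"

definition gamma_spin_inf :: "nat \<Rightarrow> real \<Rightarrow> real \<Rightarrow> complex mat" where
  "gamma_spin_inf k n1 n2 = mat (2 ^ k) (2 ^ k) (\<lambda>(r, s).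
     \<Sum>j\<le>k. complex_of_real (real (k choose j) * n1 ^ (k - j) * n2 ^ j) *
            ketbra (sym_vec (k - j) j) $$ (r, s))"

definition adjoint :: "complex mat \<Rightarrow> complex mat" where
  "adjoint A = mat (dim_col A) (dim_row A) (\<lambda>(i, j). cnj (A $$ (j, i)))"

definition psd :: "complex mat \<Rightarrow> bool" where
  "psd B \<longleftrightarrow> square_mat B \<and> adjoint B = B \<and>
     (\<forall>v \<in> carrier_vec (dim_row B). 0 \<le> Re (\<Sum>i<dim_row B. cnj (v $ i) * (B *\<^sub>v v) $ i))"

definition mat_abs :: "complex mat \<Rightarrow> complex mat" where
  "mat_abs A = (THE B. B \<in> carrier_mat (dim_col A) (dim_col A) \<and> psd B \<and> B * B = adjoint A * A)"

definition mtrace :: "complex mat \<Rightarrow> complex" where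
  "mtrace A = (\<Sum>i<dim_row A. A $$ (i, i))"

definition trace_norm :: "complex mat \<Rightarrow> real" where
  "trace_norm A = Re (mtrace (mat_abs A))"

end

theory Submission
  imports Defs
begin

fun cntb :: "nat \<Rightarrow> nat \<Rightarrow> nat" where
  "cntb 0 i = 0"
| "cntb (Suc n) i = i mod 2 + cntb n (i div 2)"

fun bits :: "nat \<Rightarrow> nat \<Rightarrow> bool list" where
  "bits 0 i = []"
| "bits (Suc n) i = odd i # bits n (i div 2)"

lemma word_index_Nil[simp]: "word_index [] = 0"
  by (simp add: word_index_def)

lemma word_index_Cons[simp]:
  "word_index (w # ws) = (if w then 1 else 0) + 2 * word_index ws"
proof -
  have "word_index (w # ws) = (\<Sum>m<Suc (length ws). if (w#ws) ! m then 2 ^ m else 0)"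
    by (simp add: word_index_def)
  also have "\<dots> = (if w then 1 else 0) + (\<Sum>m<length ws. if ws ! m then 2 ^ Suc m else 0)"
    by (subst sum.lessThan_Suc_shift) simp
  also have "(\<Sum>m<length ws. if ws ! m then 2 ^ Suc m else 0) = 2 * word_index ws"
    by (simp add: word_index_def sum_distrib_left if_distrib cong: if_cong)
  finally show ?thesis .
qed

lemma length_bits[simp]: "length (bits n i) = n"
  by (induction n arbitrary: i) auto

lemma word_index_bits: "i < 2 ^ n \<Longrightarrow> word_index (bits n i) = i"
proof (induction n arbitrary: i)
  case 0 then show ?case by simp
next
  case (Suc n)
  have "i div 2 < 2 ^ n" using Suc.prems by auto
  then show ?case using Suc.IH by auto
qed

lemma bits_word_index: "bits (length ws) (word_index ws) = ws"
  by (induction ws) auto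

lemma word_index_less: "word_index ws < 2 ^ length ws"
  by (induction ws) auto

lemma count_bits: "length (filter id (bits n i)) = cntb n i"
  by (induction n arbitrary: i) (auto simp: odd_iff_mod_2_eq_one)

lemma cntb_le: "cntb n i \<le> n"
proof (induction n arbitrary: i)
  case (Suc n)
  have "i mod 2 \<le> 1" by simp
  then show ?case using Suc.IH[of "i div 2"] by simp
qed simp

lemma cntb_add: "r < 2 ^ k \<Longrightarrow> cntb (k + m) (r + 2 ^ k * b) = cntb k r + cntb m b"
proof (induction k arbitrary: r)
  case 0 then show ?case by simp
next
  case (Suc k)
  have e1: "(r + 2 ^ Suc k * b) mod 2 = r mod 2" by (simp add: mult.assoc)
  have e2: "(r + 2 ^ Suc k * b) div 2 = r div 2 + 2 ^ k * b" by simp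
  have "r div 2 < 2 ^ k" using Suc.prems by auto
  then show ?case using Suc.IH e1 e2 by simp
qed

lemma sum_double: "(\<Sum>b<2 * M. f b) = (\<Sum>c<M. f (2 * c) + f (2 * c + 1))"
  for f :: "nat \<Rightarrow> 'a::comm_monoid_add"
  by (induction M) (auto simp: ac_simps)

lemma count_cntb:
  "(\<Sum>b<2 ^ m. if cntb m b = t then (1::'a::semiring_1) else 0) = of_nat (m choose t)"
proof (induction m arbitrary: t)
  case 0 then show ?case by (cases t) auto
next
  case (Suc m)
  have "(\<Sum>b<2 ^ Suc m. if cntb (Suc m) b = t then (1::'a) else 0)
     = (\<Sum>c<2 ^ m. (if cntb m c = t then 1 else 0) + (if Suc (cntb m c) = t then 1 else 0))"
    by (simp add: sum_double)
  also have "\<dots> = of_nat (m choose t) + (\<Sum>c<2 ^ m. if Suc (cntb m c) = t then (1::'a) else 0)"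
    by (simp add: sum.distrib Suc.IH)
  also have "\<dots> = of_nat (Suc m choose t)"
  proof (cases t)
    case 0 then show ?thesis by simp
  next
    case (Suc t')
    then show ?thesis using Suc.IH[of t'] by (simp add: add.commute)
  qed
  finally show ?case .
qed


lemma dim_sym_vec[simp]: "dim_vec (sym_vec a b) = 2 ^ (a + b)"
  by (simp add: sym_vec_def)

lemma finite_words: "finite {ws :: bool list. length ws = n \<and> P ws}"
proof -
  have "{ws :: bool list. length ws = n \<and> P ws} \<subseteq> {ws. set ws \<subseteq> UNIV \<and> length ws = n}" by auto
  moreover have "finite {ws :: bool list. set ws \<subseteq> UNIV \<and> length ws = n}"
    by (rule finite_lists_length_eq) simp
  ultimately show ?thesis by (rule finite_subset)
qed

lemma sym_vec_nth:
  assumes i: "i < 2 ^ (a + b)"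
  shows "sym_vec a b $ i = (if cntb (a + b) i = b
     then complex_of_real (1 / sqrt (real ((a + b) choose a))) else 0)"
proof -
  let ?n = "a + b"
  let ?W = "{ws. length ws = ?n \<and> length (filter id ws) = b}"
  have "(\<Sum>ws\<in>?W. word_vec ws $ i) = (\<Sum>ws\<in>?W. if bits ?n i = ws then 1 else 0)"
  proof (rule sum.cong)
    fix ws assume ws: "ws \<in> ?W"
    then have len: "length ws = ?n" by simp
    have "word_vec ws $ i = (if i = word_index ws then 1 else 0)"
      unfolding word_vec_def using i word_index_less[of ws] len by simp
    also have "(i = word_index ws) = (bits ?n i = ws)"
      using word_index_bits[OF i] bits_word_index[of ws] len by metis
    finally show "word_vec ws $ i = (if bits ?n i = ws then 1 else 0)" .
  qed simp
  also have "\<dots> = (if bits ?n i \<in> ?W then 1 else 0)"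
    by (rule sum.delta') (rule finite_words)
  also have "(bits ?n i \<in> ?W) = (cntb ?n i = b)" by (simp add: count_bits)
  finally have S: "(\<Sum>ws\<in>?W. word_vec ws $ i) = (if cntb ?n i = b then 1 else 0)" .
  have "sym_vec a b $ i = complex_of_real (1 / sqrt (real ((a + b) choose a))) * (\<Sum>ws\<in>?W. word_vec ws $ i)"
    unfolding sym_vec_def using i by (rule index_vec)
  then show ?thesis unfolding S by simp
qed

lemma ketbra_nth: "i < dim_vec v \<Longrightarrow> j < dim_vec v \<Longrightarrow> ketbra v $$ (i, j) = v $ i * cnj (v $ j)"
  by (simp add: ketbra_def)

lemma dim_ketbra[simp]: "dim_row (ketbra v) = dim_vec v" "dim_col (ketbra v) = dim_vec v"
  by (simp_all add: ketbra_def)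

lemma ofr_sq: "x \<ge> 0 \<Longrightarrow> complex_of_real (1 / sqrt x) * cnj (complex_of_real (1 / sqrt x)) = complex_of_real (1 / x)"
  by (simp flip: of_real_mult add: real_sqrt_mult[symmetric])

lemma sqsq: "complex_of_real (sqrt (real n)) * complex_of_real (sqrt (real n)) = of_nat n"
  by (simp flip: of_real_mult)

lemma ketbra_sym_nth:
  assumes "r < 2 ^ (a + b)" "s < 2 ^ (a + b)"
  shows "ketbra (sym_vec a b) $$ (r, s) = (if cntb (a+b) r = b \<and> cntb (a+b) s = b
     then complex_of_real (1 / real ((a + b) choose a)) else 0)"
  using assms by (simp add: ketbra_nth sym_vec_nth sqsq)


lemma idx_lt:
  fixes r b k m :: nat
  assumes r: "r < 2 ^ k" and b: "b < 2 ^ m"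
  shows "r + 2 ^ k * b < 2 ^ (k + m)"
proof -
  have "r + 2 ^ k * b < 2 ^ k * (b + 1)" using r by simp
  also have "\<dots> \<le> 2 ^ k * 2 ^ m" using b by (intro mult_left_mono) auto
  finally show ?thesis by (simp add: power_add)
qed

lemma sum_if_count:
  "(\<Sum>b<2 ^ m. if cntb m b = t then x else 0) = x * of_nat (m choose t)"
  for x :: "'a::semiring_1"
proof -
  have "(\<Sum>b<2 ^ m. if cntb m b = t then x else 0) = (\<Sum>b<2 ^ m. x * (if cntb m b = t then 1 else 0))"
    by (rule sum.cong) auto
  also have "\<dots> = x * of_nat (m choose t)" by (simp only: sum_distrib_left[symmetric] count_cntb)
  finally show ?thesis .
qed

lemma gamma_spin_nth:
  assumes kN: "k \<le> N1 + N2" and r: "r < 2 ^ k" and s: "s < 2 ^ k"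
  shows "gamma_spin k N1 N2 $$ (r, s) = (if cntb k r = cntb k s \<and> cntb k r \<le> N2
     then complex_of_real (real ((N1 + N2 - k) choose (N2 - cntb k r)) / real ((N1 + N2) choose N1)) else 0)"
proof -
  define m where "m = N1 + N2 - k"
  have Nm: "N1 + N2 = k + m" using kN by (simp add: m_def)
  define x where "x = complex_of_real (1 / real ((N1 + N2) choose N1))"
  have "gamma_spin k N1 N2 $$ (r, s) = (\<Sum>b::nat<2 ^ m. ketbra (sym_vec N1 N2) $$ (r + 2 ^ k * b, s + 2 ^ k * b))"
    using r s by (simp add: gamma_spin_def marginal_def m_def)
  also have "\<dots> = (\<Sum>b<2 ^ m. if cntb k r + cntb m b = N2 \<and> cntb k s + cntb m b = N2 then x else 0)"
  proof (rule sum.cong)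
    fix b :: nat assume "b \<in> {..<2 ^ m}"
    then have b: "b < 2 ^ m" by simp
    have i1: "r + 2 ^ k * b < 2 ^ (N1 + N2)" using idx_lt[OF r b] Nm by simp
    have i2: "s + 2 ^ k * b < 2 ^ (N1 + N2)" using idx_lt[OF s b] Nm by simp
    have c1: "cntb (N1 + N2) (r + 2 ^ k * b) = cntb k r + cntb m b" using cntb_add[OF r] Nm by simp
    have c2: "cntb (N1 + N2) (s + 2 ^ k * b) = cntb k s + cntb m b" using cntb_add[OF s] Nm by simp
    show "ketbra (sym_vec N1 N2) $$ (r + 2 ^ k * b, s + 2 ^ k * b) =
      (if cntb k r + cntb m b = N2 \<and> cntb k s + cntb m b = N2 then x else 0)"
      using ketbra_sym_nth[OF i1 i2] c1 c2 by (simp add: x_def)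
  qed simp
  also have "\<dots> = (if cntb k r = cntb k s \<and> cntb k r \<le> N2
     then complex_of_real (real ((N1 + N2 - k) choose (N2 - cntb k r)) / real ((N1 + N2) choose N1)) else 0)"
  proof (cases "cntb k r = cntb k s \<and> cntb k r \<le> N2")
    case True
    have "(\<Sum>b<2 ^ m. if cntb k r + cntb m b = N2 \<and> cntb k s + cntb m b = N2 then x else 0)
       = (\<Sum>b<2 ^ m. if cntb m b = N2 - cntb k r then x else 0)"
      by (rule sum.cong) (use True in auto)
    also have "\<dots> = x * of_nat (m choose (N2 - cntb k r))" by (rule sum_if_count)
    finally show ?thesis using True by (simp add: x_def m_def)
  next
    case False
    then show ?thesis by (auto intro!: sum.neutral)
  qed
  finally show ?thesis .
qed

lemma gamma_spin_inf_nth: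
  assumes r: "r < 2 ^ k" and s: "s < 2 ^ k"
  shows "gamma_spin_inf k n1 n2 $$ (r, s) = (if cntb k r = cntb k s
     then complex_of_real (n1 ^ (k - cntb k r) * n2 ^ cntb k r) else 0)"
proof -
  have "gamma_spin_inf k n1 n2 $$ (r, s) = (\<Sum>j\<le>k. complex_of_real (real (k choose j) * n1 ^ (k - j) * n2 ^ j) *
            ketbra (sym_vec (k - j) j) $$ (r, s))"
    using r s by (simp add: gamma_spin_inf_def)
  also have "\<dots> = (\<Sum>j\<le>k. if cntb k r = j \<and> cntb k s = j then complex_of_real (n1 ^ (k - j) * n2 ^ j) else 0)"
  proof (rule sum.cong)
    fix j assume "j \<in> {..k}"
    then have j: "j \<le> k" by simp
    then have kk: "k - j + j = k" by simp
    have r': "r < 2 ^ (k - j + j)" "s < 2 ^ (k - j + j)" using r s kk by auto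
    have cpos: "real (k choose (k - j)) > 0" using j by simp
    have ch: "k choose (k - j) = k choose j" using j by (simp add: binomial_symmetric[symmetric])
    show "complex_of_real (real (k choose j) * n1 ^ (k - j) * n2 ^ j) * ketbra (sym_vec (k - j) j) $$ (r, s)
      = (if cntb k r = j \<and> cntb k s = j then complex_of_real (n1 ^ (k - j) * n2 ^ j) else 0)"
      using ketbra_sym_nth[OF r'] kk ch cpos
      by (simp flip: of_real_mult of_real_divide add: field_simps)
  qed simp
  also have "\<dots> = (if cntb k r = cntb k s then complex_of_real (n1 ^ (k - cntb k r) * n2 ^ cntb k r) else 0)"
  proof (cases "cntb k r = cntb k s")
    case True
    have "(\<Sum>j\<le>k. if cntb k r = j \<and> cntb k s = j then complex_of_real (n1 ^ (k - j) * n2 ^ j) else 0)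
      = (\<Sum>j\<le>k. if cntb k r = j then complex_of_real (n1 ^ (k - j) * n2 ^ j) else 0)"
      using True by simp
    also have "\<dots> = complex_of_real (n1 ^ (k - cntb k r) * n2 ^ cntb k r)"
      using cntb_le[of k r] by (subst sum.delta') auto
    finally show ?thesis using True by simp
  next
    case False
    then show ?thesis by (auto intro!: sum.neutral)
  qed
  finally show ?thesis .
qed


lemma mv_nth: "S \<in> carrier_mat n n \<Longrightarrow> w \<in> carrier_vec n \<Longrightarrow> i < n \<Longrightarrow>
  (S *\<^sub>v w) $ i = (\<Sum>j<n. S $$ (i, j) * w $ j)"
  by (auto simp: scalar_prod_def atLeast0LessThan)

lemma psd_herm: "psd S \<Longrightarrow> S \<in> carrier_mat n n \<Longrightarrow> i < n \<Longrightarrow> j < n \<Longrightarrow> S $$ (i, j) = cnj (S $$ (j, i))"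
proof -
  assume "psd S" "S \<in> carrier_mat n n" "i < n" "j < n"
  then have "adjoint S $$ (i, j) = S $$ (i, j)" by (simp add: psd_def)
  then show ?thesis using \<open>S \<in> carrier_mat n n\<close> \<open>i < n\<close> \<open>j < n\<close> by (auto simp: adjoint_def)
qed

lemma psd_Q: "psd S \<Longrightarrow> S \<in> carrier_mat n n \<Longrightarrow> v \<in> carrier_vec n \<Longrightarrow>
  0 \<le> Re (\<Sum>i<n. cnj (v $ i) * (S *\<^sub>v v) $ i)"
  by (auto simp: psd_def)

lemma qexp:
  assumes S: "S \<in> carrier_mat n n" and w: "w \<in> carrier_vec n"
  shows "(\<Sum>i<n. cnj (v $ i) * (S *\<^sub>v w) $ i) = (\<Sum>i<n. \<Sum>j<n. cnj (v $ i) * S $$ (i, j) * w $ j)"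
proof (rule sum.cong)
  fix i assume "i \<in> {..<n}"
  then have i: "i < n" by simp
  show "cnj (v $ i) * (S *\<^sub>v w) $ i = (\<Sum>j<n. cnj (v $ i) * S $$ (i, j) * w $ j)"
    unfolding mv_nth[OF S w i] by (simp add: sum_distrib_left mult.assoc)
qed simp

lemma herm_Q:
  assumes S: "S \<in> carrier_mat n n" and h: "\<And>i j. i < n \<Longrightarrow> j < n \<Longrightarrow> S $$ (i, j) = cnj (S $$ (j, i))"
    and v: "v \<in> carrier_vec n" and w: "w \<in> carrier_vec n"
  shows "(\<Sum>i<n. cnj (v $ i) * (S *\<^sub>v w) $ i) = cnj (\<Sum>i<n. cnj (w $ i) * (S *\<^sub>v v) $ i)"
proof -
  have "(\<Sum>i<n. cnj (v $ i) * (S *\<^sub>v w) $ i) = (\<Sum>i<n. \<Sum>j<n. cnj (v $ i) * S $$ (i, j) * w $ j)"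
    by (rule qexp[OF S w])
  also have "\<dots> = (\<Sum>j<n. \<Sum>i<n. cnj (v $ i) * S $$ (i, j) * w $ j)" by (rule sum.swap)
  also have "\<dots> = (\<Sum>j<n. \<Sum>i<n. cnj (cnj (w $ j) * S $$ (j, i) * v $ i))"
  proof (intro sum.cong refl)
    fix i j assume "i \<in> {..<n}" "j \<in> {..<n}"
    then have "S $$ (j, i) = cnj (S $$ (i, j))" by (intro h) auto
    then show "cnj (v $ i) * S $$ (i, j) * w $ j = cnj (cnj (w $ j) * S $$ (j, i) * v $ i)"
      by (simp add: mult_ac)
  qed
  also have "\<dots> = cnj (\<Sum>j<n. \<Sum>i<n. cnj (w $ j) * S $$ (j, i) * v $ i)"
    by (simp only: cnj_sum)
  also have "\<dots> = cnj (\<Sum>i<n. cnj (w $ i) * (S *\<^sub>v v) $ i)"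
    by (simp only: qexp[OF S v])
  finally show ?thesis .
qed

lemma quad_nonneg_zero:
  fixes A B :: real
  assumes "B \<ge> 0" "\<And>t. 0 \<le> 2 * t * A + t ^ 2 * B"
  shows "A = 0"
proof (rule ccontr)
  assume A: "A \<noteq> 0"
  define t where "t = - A / (B + 1)"
  have B1: "B + 1 > 0" using assms(1) by simp
  have tB: "t * (B + 1) = - A" using B1 by (simp add: t_def)
  have "0 \<le> 2 * t * A + t ^ 2 * B" by (rule assms(2))
  also have "2 * t * A + t ^ 2 * B = - ((t ^ 2) * (B + 2))"
  proof -
    have "2 * t * A = - 2 * t * (t * (B + 1))" using tB by simp
    then show ?thesis by (simp add: power2_eq_square ring_distribs)
  qed
  also have "\<dots> < 0"
  proof -
    have "t \<noteq> 0" using A B1 by (simp add: t_def)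
    then have "t ^ 2 > 0" by simp
    then show ?thesis using assms(1) by (simp add: mult_pos_pos)
  qed
  finally show False by simp
qed

lemma expand4: "cnj (a + complex_of_real t * b) * (c + complex_of_real t * d) =
  cnj a * c + complex_of_real t * (cnj a * d) + complex_of_real t * (cnj b * c) + complex_of_real (t ^ 2) * (cnj b * d)"
  by (simp add: ring_distribs power2_eq_square mult_ac)

lemma re4: "Re (X + complex_of_real t * cnj (complex_of_real A) + complex_of_real t * complex_of_real A + complex_of_real (t ^ 2) * Y)
  = Re X + 2 * t * A + t ^ 2 * Re Y"
  by simp

lemma psd_kernel:
  assumes p: "psd S" and S: "S \<in> carrier_mat n n" and v: "v \<in> carrier_vec n"
    and z: "Re (\<Sum>i<n. cnj (v $ i) * (S *\<^sub>v v) $ i) = 0"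
  shows "S *\<^sub>v v = 0\<^sub>v n"
proof -
  define u where "u = S *\<^sub>v v"
  have u: "u \<in> carrier_vec n" using S v by (simp add: u_def)
  have h: "\<And>i j. i < n \<Longrightarrow> j < n \<Longrightarrow> S $$ (i, j) = cnj (S $$ (j, i))" using psd_herm[OF p S] .
  define A where "A = (\<Sum>i<n. cmod (u $ i) ^ 2)"
  define Bq where "Bq = Re (\<Sum>i<n. cnj (u $ i) * (S *\<^sub>v u) $ i)"
  have Bq: "Bq \<ge> 0" unfolding Bq_def by (rule psd_Q[OF p S u])
  have cross: "(\<Sum>i<n. cnj (v $ i) * (S *\<^sub>v u) $ i) = cnj (\<Sum>i<n. cnj (u $ i) * u $ i)"
    using herm_Q[OF S h v u] by (simp add: u_def)
  have "(\<Sum>i<n. cnj (u $ i) * u $ i) = (\<Sum>i<n. complex_of_real (cmod (u $ i) ^ 2))"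
    by (rule sum.cong) (auto simp only: complex_norm_square mult.commute)
  also have "\<dots> = of_real A" by (simp only: A_def of_real_sum)
  finally have uu: "(\<Sum>i<n. cnj (u $ i) * u $ i) = of_real A" .
  have "\<And>t. 0 \<le> 2 * t * A + t ^ 2 * Bq"
  proof -
    fix t :: real
    define w where "w = v + complex_of_real t \<cdot>\<^sub>v u"
    have w: "w \<in> carrier_vec n" using v u by (simp add: w_def)
    have Sw: "S *\<^sub>v w = u + complex_of_real t \<cdot>\<^sub>v (S *\<^sub>v u)"
      using S v u by (simp add: w_def mult_add_distrib_mat_vec mult_mat_vec u_def)
    have "(\<Sum>i<n. cnj (w $ i) * (S *\<^sub>v w) $ i) =
       (\<Sum>i<n. cnj (v $ i) * u $ i + of_real t * (cnj (v $ i) * (S *\<^sub>v u) $ i)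
          + of_real t * (cnj (u $ i) * u $ i) + of_real (t ^ 2) * (cnj (u $ i) * (S *\<^sub>v u) $ i))"
    proof (rule sum.cong)
      fix i assume "i \<in> {..<n}"
      then have i: "i < n" by simp
      show "cnj (w $ i) * (S *\<^sub>v w) $ i = cnj (v $ i) * u $ i + of_real t * (cnj (v $ i) * (S *\<^sub>v u) $ i)
          + of_real t * (cnj (u $ i) * u $ i) + of_real (t ^ 2) * (cnj (u $ i) * (S *\<^sub>v u) $ i)"
      proof -
        have "w $ i = v $ i + complex_of_real t * u $ i" using i v u by (simp add: w_def)
        moreover have "(S *\<^sub>v w) $ i = u $ i + complex_of_real t * (S *\<^sub>v u) $ i"
          using i u S unfolding Sw by simp
        ultimately show ?thesis by (simp only: expand4)
      qed
    qed simp
    also have "\<dots> = (\<Sum>i<n. cnj (v $ i) * u $ i) + of_real t * (\<Sum>i<n. cnj (v $ i) * (S *\<^sub>v u) $ i)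
          + of_real t * (\<Sum>i<n. cnj (u $ i) * u $ i) + of_real (t ^ 2) * (\<Sum>i<n. cnj (u $ i) * (S *\<^sub>v u) $ i)"
      by (simp add: sum.distrib sum_distrib_left)
    finally have eq: "(\<Sum>i<n. cnj (w $ i) * (S *\<^sub>v w) $ i) = \<dots>" .
    have "0 \<le> Re (\<Sum>i<n. cnj (w $ i) * (S *\<^sub>v w) $ i)" by (rule psd_Q[OF p S w])
    also have "\<dots> = 2 * t * A + t ^ 2 * Bq"
      unfolding eq cross uu re4 using z by (simp add: u_def Bq_def)
    finally show "0 \<le> 2 * t * A + t ^ 2 * Bq" .
  qed
  then have "A = 0" using quad_nonneg_zero[OF Bq] by blast
  then have "\<forall>i\<in>{..<n}. cmod (u $ i) ^ 2 = 0" unfolding A_def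
    by (subst sum_nonneg_eq_0_iff[symmetric]) auto
  then show ?thesis using u S by (intro eq_vecI) (auto simp: u_def)
qed

lemma mm_nth: "A \<in> carrier_mat n n \<Longrightarrow> B \<in> carrier_mat n n \<Longrightarrow> i < n \<Longrightarrow> j < n \<Longrightarrow>
  (A * B) $$ (i, j) = (\<Sum>l<n. A $$ (i, l) * B $$ (l, j))"
  by (auto simp: scalar_prod_def atLeast0LessThan)

lemma sum3_rot: "(\<Sum>b<n. \<Sum>a<n. \<Sum>c<(n::nat). f a b c) = (\<Sum>a<n. \<Sum>c<n. \<Sum>b<n. f a b c)"
  for f :: "nat \<Rightarrow> nat \<Rightarrow> nat \<Rightarrow> 'a::comm_monoid_add"
proof -
  have "(\<Sum>b<n. \<Sum>a<n. \<Sum>c<n. f a b c) = (\<Sum>a<n. \<Sum>b<n. \<Sum>c<n. f a b c)" by (rule sum.swap)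
  also have "\<dots> = (\<Sum>a<n. \<Sum>c<n. \<Sum>b<n. f a b c)" by (intro sum.cong refl sum.swap)
  finally show ?thesis .
qed

lemma sqrt_unique:
  assumes B: "B \<in> carrier_mat n n" and C: "C \<in> carrier_mat n n"
    and pB: "psd B" and pC: "psd C" and BC: "B * B = C * C"
  shows "B = C"
proof -
  define x where "x i j = B $$ (i, j) - C $$ (i, j)" for i j
  define s where "s i j = B $$ (i, j) + C $$ (i, j)" for i j
  have hx: "x i j = cnj (x j i)" if "i < n" "j < n" for i j
    using psd_herm[OF pB B that] psd_herm[OF pC C that] by (simp add: x_def)
  have anti: "(\<Sum>l<n. x i l * s l j) = - (\<Sum>l<n. s i l * x l j)" if ij: "i < n" "j < n" for i j
  proof -
    have "(\<Sum>l<n. x i l * s l j) + (\<Sum>l<n. s i l * x l j)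
        = 2 * ((\<Sum>l<n. B $$ (i, l) * B $$ (l, j)) - (\<Sum>l<n. C $$ (i, l) * C $$ (l, j)))"
    proof -
      have "(\<Sum>l<n. x i l * s l j) + (\<Sum>l<n. s i l * x l j) = (\<Sum>l<n. x i l * s l j + s i l * x l j)"
        by (simp only: sum.distrib)
      also have "\<dots> = (\<Sum>l<n. 2 * (B $$ (i, l) * B $$ (l, j) - C $$ (i, l) * C $$ (l, j)))"
        by (intro sum.cong refl) (simp add: x_def s_def algebra_simps)
      also have "\<dots> = 2 * ((\<Sum>l<n. B $$ (i, l) * B $$ (l, j)) - (\<Sum>l<n. C $$ (i, l) * C $$ (l, j)))"
        by (simp only: sum_distrib_left[symmetric] sum_subtractf)
      finally show ?thesis .
    qed
    also have "\<dots> = 0" using BC mm_nth[OF B B ij] mm_nth[OF C C ij] by simp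
    finally show ?thesis by (simp add: add_eq_0_iff)
  qed
  define T where "T = (\<Sum>i<n. \<Sum>l<n. \<Sum>j<n. x i j * s j l * x l i)"
  have T1: "T = - (\<Sum>i<n. \<Sum>l<n. \<Sum>j<n. s i j * x j l * x l i)"
  proof -
    have "T = (\<Sum>i<n. \<Sum>l<n. (\<Sum>j<n. x i j * s j l) * x l i)"
      by (simp add: T_def sum_distrib_right)
    also have "\<dots> = (\<Sum>i<n. \<Sum>l<n. - (\<Sum>j<n. s i j * x j l) * x l i)"
      by (intro sum.cong refl) (simp add: anti)
    also have "\<dots> = - (\<Sum>i<n. \<Sum>l<n. \<Sum>j<n. s i j * x j l * x l i)"
      by (simp add: sum_distrib_right sum_negf)
    finally show ?thesis .
  qed
  have T2: "(\<Sum>i<n. \<Sum>l<n. \<Sum>j<n. s i j * x j l * x l i) = T"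
  proof -
    have "(\<Sum>i<n. \<Sum>l<n. \<Sum>j<n. s i j * x j l * x l i) = (\<Sum>i<n. \<Sum>l<n. \<Sum>j<n. x l i * s i j * x j l)"
      by (intro sum.cong refl) (simp only: mult_ac)
    also have "\<dots> = (\<Sum>l<n. \<Sum>j<n. \<Sum>i<n. x l i * s i j * x j l)"
      by (rule sum3_rot)
    finally show ?thesis by (simp add: T_def)
  qed
  have Tm: "T = - T" using T1 unfolding T2 .
  have "2 * T = 0" by (metis Tm mult_2 right_minus)
  then have T0: "T = 0" by simp
  define v where "v i = vec n (\<lambda>j. x j i)" for i
  have v: "v i \<in> carrier_vec n" for i by (simp add: v_def)
  define qB where "qB i = (\<Sum>j<n. cnj (v i $ j) * (B *\<^sub>v v i) $ j)" for i
  define qC where "qC i = (\<Sum>j<n. cnj (v i $ j) * (C *\<^sub>v v i) $ j)" for i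
  have Tq: "(\<Sum>l<n. \<Sum>j<n. x i j * s j l * x l i) = qB i + qC i" if i: "i < n" for i
  proof -
    have "(\<Sum>l<n. \<Sum>j<n. x i j * s j l * x l i) = (\<Sum>j<n. \<Sum>l<n. x i j * s j l * x l i)"
      by (rule sum.swap)
    also have "\<dots> = (\<Sum>j<n. \<Sum>l<n. cnj (v i $ j) * B $$ (j, l) * v i $ l + cnj (v i $ j) * C $$ (j, l) * v i $ l)"
    proof (intro sum.cong refl)
      fix j l assume "j \<in> {..<n}" "l \<in> {..<n}"
      then have jl: "j < n" "l < n" by auto
      show "x i j * s j l * x l i = cnj (v i $ j) * B $$ (j, l) * v i $ l + cnj (v i $ j) * C $$ (j, l) * v i $ l"
      proof -
        have e1: "v i $ j = x j i" "v i $ l = x l i" using jl by (simp_all add: v_def)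
        have e2: "x i j = cnj (x j i)" using hx[OF i jl(1)] .
        show ?thesis unfolding e1 e2 s_def by (simp only: distrib_left distrib_right)
      qed
    qed
    also have "\<dots> = qB i + qC i"
      unfolding qB_def qC_def qexp[OF B v] qexp[OF C v] by (simp only: sum.distrib)
    finally show ?thesis .
  qed
  have "T = (\<Sum>i<n. qB i + qC i)"
    unfolding T_def by (rule sum.cong) (simp_all add: Tq)
  then have "(\<Sum>i<n. Re (qB i) + Re (qC i)) = Re T"
    by (simp only: Re_sum plus_complex.sel)
  then have "(\<Sum>i<n. Re (qB i) + Re (qC i)) = 0" using T0 by simp
  moreover have nn: "0 \<le> Re (qB i)" "0 \<le> Re (qC i)" for i
    unfolding qB_def qC_def by (rule psd_Q[OF pB B v], rule psd_Q[OF pC C v])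
  ultimately have z: "\<forall>i\<in>{..<n}. Re (qB i) + Re (qC i) = 0"
    by (subst sum_nonneg_eq_0_iff[symmetric]) (auto intro: add_nonneg_nonneg)
  have zB: "B *\<^sub>v v i = 0\<^sub>v n" and zC: "C *\<^sub>v v i = 0\<^sub>v n" if "i < n" for i
  proof -
    have s0: "Re (qB i) + Re (qC i) = 0" using z that by simp
    have r1: "Re (qB i) = 0" and r2: "Re (qC i) = 0" using s0 nn[of i] by linarith+
    show "B *\<^sub>v v i = 0\<^sub>v n"
      by (rule psd_kernel[OF pB B v]) (use r1 in \<open>simp only: qB_def\<close>)
    show "C *\<^sub>v v i = 0\<^sub>v n"
      by (rule psd_kernel[OF pC C v]) (use r2 in \<open>simp only: qC_def\<close>)
  qed
  have x0: "x j i = 0" if ji: "j < n" "i < n" for i j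
  proof -
    have "(B *\<^sub>v v i) $ i - (C *\<^sub>v v i) $ i = 0" using zB[OF ji(2)] zC[OF ji(2)] ji by simp
    moreover have "(B *\<^sub>v v i) $ i - (C *\<^sub>v v i) $ i = (\<Sum>j<n. x i j * x j i)"
      unfolding mv_nth[OF B v ji(2)] mv_nth[OF C v ji(2)] sum_subtractf[symmetric]
      by (intro sum.cong refl) (simp add: x_def v_def left_diff_distrib)
    moreover have "(\<Sum>j<n. x i j * x j i) = of_real (\<Sum>j<n. cmod (x j i) ^ 2)"
      unfolding of_real_sum
    proof (rule sum.cong)
      fix j assume "j \<in> {..<n}"
      then have "j < n" by simp
      then have "x i j = cnj (x j i)" using hx ji(2) by blast
      then show "x i j * x j i = complex_of_real (cmod (x j i) ^ 2)"
        by (simp only: complex_norm_square mult.commute)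
    qed simp
    ultimately have "complex_of_real (\<Sum>j<n. cmod (x j i) ^ 2) = 0" by metis
    then have "(\<Sum>j<n. cmod (x j i) ^ 2) = 0" by (simp only: of_real_eq_0_iff)
    then have "\<forall>j\<in>{..<n}. cmod (x j i) ^ 2 = 0" by (subst sum_nonneg_eq_0_iff[symmetric]) auto
    then show ?thesis using ji by simp
  qed
  show ?thesis
  proof (rule eq_matI)
    fix i j assume "i < dim_row C" "j < dim_col C"
    then have ij: "i < n" "j < n" using C by auto
    have "x i j = 0" using x0[OF ij] .
    then show "B $$ (i, j) = C $$ (i, j)" by (simp add: x_def)
  qed (use B C in auto)
qed


lemma block_quad:
  fixes \<delta> :: "nat \<Rightarrow> real" and c :: "nat \<Rightarrow> nat"
  assumes cK: "\<And>r. r < n \<Longrightarrow> c r \<le> K"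
  shows "(\<Sum>i<n. \<Sum>j<n. cnj (v $ i) * (if c i = c j then complex_of_real (\<delta> (c i)) else 0) * v $ j)
    = (\<Sum>t\<le>K. complex_of_real (\<delta> t) * (cnj (\<Sum>j<n. if c j = t then v $ j else 0) * (\<Sum>j<n. if c j = t then v $ j else 0)))"
proof -
  have "(\<Sum>t\<le>K. complex_of_real (\<delta> t) * (cnj (\<Sum>j<n. if c j = t then v $ j else 0) * (\<Sum>j<n. if c j = t then v $ j else 0)))
     = (\<Sum>t\<le>K. \<Sum>i<n. \<Sum>j<n. complex_of_real (\<delta> t) * ((if c i = t then cnj (v $ i) else 0) * (if c j = t then v $ j else 0)))"
  proof -
    have cS: "\<And>t. cnj (\<Sum>j<n. if c j = t then v $ j else 0) = (\<Sum>i<n. if c i = t then cnj (v $ i) else 0)"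
      unfolding cnj_sum by (rule sum.cong) auto
    show ?thesis unfolding cS sum_product by (simp only: sum_distrib_left)
  qed
  also have "\<dots> = (\<Sum>i<n. \<Sum>t\<le>K. \<Sum>j<n. complex_of_real (\<delta> t) * ((if c i = t then cnj (v $ i) else 0) * (if c j = t then v $ j else 0)))"
    by (rule sum.swap)
  also have "\<dots> = (\<Sum>i<n. \<Sum>j<n. \<Sum>t\<le>K. complex_of_real (\<delta> t) * ((if c i = t then cnj (v $ i) else 0) * (if c j = t then v $ j else 0)))"
    by (intro sum.cong refl sum.swap)
  also have "\<dots> = (\<Sum>i<n. \<Sum>j<n. cnj (v $ i) * (if c i = c j then complex_of_real (\<delta> (c i)) else 0) * v $ j)"
  proof (intro sum.cong refl)
    fix i j assume "i \<in> {..<n}" "j \<in> {..<n}"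
    then have ci: "c i \<le> K" using cK by auto
    have "(\<Sum>t\<le>K. complex_of_real (\<delta> t) * ((if c i = t then cnj (v $ i) else 0) * (if c j = t then v $ j else 0)))
      = (\<Sum>t\<le>K. if c i = t then (if c j = c i then complex_of_real (\<delta> (c i)) * (cnj (v $ i) * v $ j) else 0) else 0)"
      by (intro sum.cong refl) auto
    also have "\<dots> = (if c j = c i then complex_of_real (\<delta> (c i)) * (cnj (v $ i) * v $ j) else 0)"
      using ci by (subst sum.delta') auto
    finally show "(\<Sum>t\<le>K. complex_of_real (\<delta> t) * ((if c i = t then cnj (v $ i) else 0) * (if c j = t then v $ j else 0)))
      = cnj (v $ i) * (if c i = c j then complex_of_real (\<delta> (c i)) else 0) * v $ j"
      by (auto simp: mult_ac)
  qed
  finally show ?thesis by simp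
qed

lemma trace_norm_block:
  fixes \<delta> :: "nat \<Rightarrow> real" and c :: "nat \<Rightarrow> nat"
  assumes cK: "\<And>r. r < n \<Longrightarrow> c r \<le> K"
  shows "trace_norm (mat n n (\<lambda>(r, s). if c r = c s then complex_of_real (\<delta> (c r)) else 0))
       = (\<Sum>r<n. \<bar>\<delta> (c r)\<bar>)"
proof -
  define D where "D = mat n n (\<lambda>(r, s). if c r = c s then complex_of_real (\<delta> (c r)) else 0)"
  define B0 where "B0 = mat n n (\<lambda>(r, s). if c r = c s then complex_of_real \<bar>\<delta> (c r)\<bar> else 0)"
  have D: "D \<in> carrier_mat n n" by (simp add: D_def)
  have B0: "B0 \<in> carrier_mat n n" by (simp add: B0_def)
  have adjD: "adjoint D \<in> carrier_mat n n" by (simp add: D_def adjoint_def)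
  have hB0: "adjoint B0 = B0"
    by (rule eq_matI) (auto simp: B0_def adjoint_def)
  have qB0: "0 \<le> Re (\<Sum>i<n. cnj (v $ i) * (B0 *\<^sub>v v) $ i)" if v: "v \<in> carrier_vec n" for v
  proof -
    define S where "S t = (\<Sum>j<n. if c j = t then v $ j else 0)" for t
    have "(\<Sum>i<n. cnj (v $ i) * (B0 *\<^sub>v v) $ i) = (\<Sum>i<n. \<Sum>j<n. cnj (v $ i) * B0 $$ (i, j) * v $ j)"
      by (rule qexp[OF B0 v])
    also have "\<dots> = (\<Sum>i<n. \<Sum>j<n. cnj (v $ i) * (if c i = c j then complex_of_real \<bar>\<delta> (c i)\<bar> else 0) * v $ j)"
      by (intro sum.cong refl) (simp add: B0_def)
    also have "\<dots> = (\<Sum>t\<le>K. complex_of_real \<bar>\<delta> t\<bar> * (cnj (S t) * S t))"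
      unfolding S_def by (rule block_quad[where \<delta> = "\<lambda>t. \<bar>\<delta> t\<bar>", OF cK])
    also have "\<dots> = (\<Sum>t\<le>K. complex_of_real (\<bar>\<delta> t\<bar> * cmod (S t) ^ 2))"
      by (intro sum.cong refl) (simp only: of_real_mult complex_norm_square mult.commute)
    finally have "Re (\<Sum>i<n. cnj (v $ i) * (B0 *\<^sub>v v) $ i) = (\<Sum>t\<le>K. \<bar>\<delta> t\<bar> * cmod (S t) ^ 2)"
      by (simp add: Re_sum)
    also have "\<dots> \<ge> 0" by (intro sum_nonneg) simp
    finally show ?thesis .
  qed
  have pB0: "psd B0"
    unfolding psd_def using hB0 qB0 B0 by auto
  have sq: "B0 * B0 = adjoint D * D"
  proof (rule eq_matI)
    fix i j assume "i < dim_row (adjoint D * D)" "j < dim_col (adjoint D * D)"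
    then have ij: "i < n" "j < n" using adjD D by auto
    have "(B0 * B0) $$ (i, j) = (\<Sum>l<n. B0 $$ (i, l) * B0 $$ (l, j))" by (rule mm_nth[OF B0 B0 ij])
    also have "\<dots> = (\<Sum>l<n. adjoint D $$ (i, l) * D $$ (l, j))"
    proof (intro sum.cong refl)
      fix l assume "l \<in> {..<n}"
      then have l: "l < n" by simp
      show "B0 $$ (i, l) * B0 $$ (l, j) = adjoint D $$ (i, l) * D $$ (l, j)"
        using ij l by (auto simp: B0_def D_def adjoint_def simp flip: of_real_mult)
    qed
    also have "\<dots> = (adjoint D * D) $$ (i, j)" by (rule mm_nth[OF adjD D ij, symmetric])
    finally show "(B0 * B0) $$ (i, j) = (adjoint D * D) $$ (i, j)" .
  qed (use adjD D B0 in auto)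
  have "mat_abs D = B0"
    unfolding mat_abs_def
  proof (rule the_equality)
    show "B0 \<in> carrier_mat (dim_col D) (dim_col D) \<and> psd B0 \<and> B0 * B0 = adjoint D * D"
      using B0 pB0 sq D by auto
  next
    fix B assume "B \<in> carrier_mat (dim_col D) (dim_col D) \<and> psd B \<and> B * B = adjoint D * D"
    then show "B = B0" using sqrt_unique[of B n B0] B0 pB0 sq D by auto
  qed
  then have "trace_norm D = Re (mtrace B0)"
    by (simp add: trace_norm_def)
  also have "mtrace B0 = (\<Sum>i<n. complex_of_real \<bar>\<delta> (c i)\<bar>)"
    unfolding mtrace_def by (rule sum.cong) (auto simp: B0_def)
  also have "Re \<dots> = (\<Sum>r<n. \<bar>\<delta> (c r)\<bar>)" by (simp add: Re_sum)
  finally show ?thesis unfolding D_def .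
qed


lemma fact_prod: "m \<le> n \<Longrightarrow> fact n = fact (n - m) * (\<Prod>i<m. n - i :: nat)"
proof (induction m)
  case 0 then show ?case by simp
next
  case (Suc m)
  then have "n - m = Suc (n - Suc m)" by simp
  then have "fact (n - m) = (n - m) * (fact (n - Suc m) :: nat)" by simp
  then show ?case using Suc by (simp add: mult_ac)
qed

lemma prod_split: "(\<Prod>i<t+s. g i) = (\<Prod>i<t. g i) * (\<Prod>j<s. g (t + j))"
  for g :: "nat \<Rightarrow> 'a::comm_monoid_mult"
  by (induction s) (simp_all add: mult_ac)

lemma binom_ratio:
  fixes N N1 N2 k t :: nat
  assumes N: "N = N1 + N2" and t: "t \<le> N2" "k - t \<le> N1" "t \<le> k"
  shows "(N choose N2) * ((\<Prod>i<t. N2 - i) * (\<Prod>j<k-t. N1 - j)) = ((N - k) choose (N2 - t)) * (\<Prod>i<k. N - i)"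
proof -
  let ?A = "\<Prod>i<t. N2 - i" and ?B = "\<Prod>j<k-t. N1 - j" and ?P = "\<Prod>i<k. N - i"
  have kN: "k \<le> N" using N t by simp
  have fa: "fact N2 = fact (N2 - t) * ?A" by (rule fact_prod[OF t(1)])
  have fb: "fact N1 = fact (N1 - (k - t)) * ?B" by (rule fact_prod[OF t(2)])
  have fN: "fact N = fact (N - k) * ?P" by (rule fact_prod[OF kN])
  have b1: "fact N2 * fact N1 * (N choose N2) = (fact N :: nat)"
    using binomial_fact_lemma[of N2 N] N by simp
  have e: "N - k - (N2 - t) = N1 - (k - t)" using N t by simp
  have b2: "fact (N2 - t) * fact (N1 - (k - t)) * ((N - k) choose (N2 - t)) = (fact (N - k) :: nat)"
    using binomial_fact_lemma[of "N2 - t" "N - k"] N t e by simp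
  have "fact (N2 - t) * fact (N1 - (k - t)) * ((N choose N2) * (?A * ?B))
      = fact (N2 - t) * fact (N1 - (k - t)) * (((N - k) choose (N2 - t)) * ?P)"
  proof -
    have "fact (N2 - t) * fact (N1 - (k - t)) * ((N choose N2) * (?A * ?B)) = fact N2 * fact N1 * (N choose N2)"
      unfolding fa fb by (simp add: mult_ac)
    also have "\<dots> = fact N" by (rule b1)
    also have "\<dots> = fact (N2 - t) * fact (N1 - (k - t)) * ((N - k) choose (N2 - t)) * ?P"
      unfolding fN b2 ..
    finally show ?thesis by (simp add: mult_ac)
  qed
  then show ?thesis by (simp del: mult_cancel_left add: mult.assoc)
qed

lemma prod_diff:
  fixes a x :: "nat \<Rightarrow> real"
  assumes "\<And>i. i < m \<Longrightarrow> \<bar>a i\<bar> \<le> 1 \<and> \<bar>x i\<bar> \<le> 1 \<and> \<bar>a i - x i\<bar> \<le> e"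
  shows "\<bar>(\<Prod>i<m. a i) - (\<Prod>i<m. x i)\<bar> \<le> m * e"
  using assms
proof (induction m)
  case 0 then show ?case by simp
next
  case (Suc m)
  have IH: "\<bar>(\<Prod>i<m. a i) - (\<Prod>i<m. x i)\<bar> \<le> m * e" using Suc by simp
  have am: "\<bar>a m\<bar> \<le> 1" "\<bar>x m\<bar> \<le> 1" "\<bar>a m - x m\<bar> \<le> e" using Suc.prems by auto
  have Px: "\<bar>\<Prod>i<m. x i\<bar> \<le> 1"
    unfolding abs_prod by (rule prod_le_1) (use Suc.prems in auto)
  have "(\<Prod>i<Suc m. a i) - (\<Prod>i<Suc m. x i)
     = ((\<Prod>i<m. a i) - (\<Prod>i<m. x i)) * a m + (\<Prod>i<m. x i) * (a m - x m)"
    by (simp add: algebra_simps)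
  also have "\<bar>\<dots>\<bar> \<le> \<bar>(\<Prod>i<m. a i) - (\<Prod>i<m. x i)\<bar> * \<bar>a m\<bar> + \<bar>\<Prod>i<m. x i\<bar> * \<bar>a m - x m\<bar>"
    by (metis abs_mult abs_triangle_ineq)
  also have "\<dots> \<le> m * e * 1 + 1 * e"
    by (intro add_mono mult_mono) (use IH am Px in auto)
  finally show ?case by (simp add: algebra_simps)
qed

lemma ratio_bound:
  fixes a m i k N :: real
  assumes "0 \<le> m" "m \<le> i" "i \<le> k" "0 \<le> a" "a \<le> N" "2 * k \<le> N" "0 < N"
  shows "\<bar>(a - m) / (N - i) - a / N\<bar> \<le> 2 * k / N"
proof -
  have Ni: "N - i \<ge> N / 2" using assms by linarith
  have Nip: "N - i > 0" using assms by linarith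
  have "(a - m) / (N - i) - a / N = (a * i - N * m) / (N * (N - i))"
    using Nip assms by (simp add: field_simps)
  also have "\<bar>\<dots>\<bar> = \<bar>a * i - N * m\<bar> / (N * (N - i))" using Nip assms by (simp add: abs_divide abs_mult)
  also have "\<dots> \<le> (N * k) / (N * (N / 2))"
  proof (rule frac_le)
    have "a * i \<le> N * k" using assms by (intro mult_mono) auto
    moreover have "N * m \<le> N * k" using assms by (intro mult_left_mono) auto
    moreover have "0 \<le> a * i" "0 \<le> N * m" using assms by auto
    ultimately show "\<bar>a * i - N * m\<bar> \<le> N * k" by linarith
    show "0 \<le> N * k" using assms by auto
    show "0 < N * (N / 2)" using assms by auto
    show "N * (N / 2) \<le> N * (N - i)" using Ni assms by (intro mult_left_mono) auto
  qed
  also have "\<dots> = 2 * k / N" using assms by (simp add: field_simps)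
  finally show ?thesis .
qed


lemma est:
  fixes N1 N2 k t :: nat and n1 n2 Cc :: real
  defines "N \<equiv> N1 + N2"
  assumes k1: "k \<le> N1" and k2: "k \<le> N2" and kN: "2 * k \<le> N" and Np: "0 < N" and t: "t \<le> k"
    and c1: "\<bar>real N1 / real N - n1\<bar> \<le> Cc / real N"
    and c2: "\<bar>real N2 / real N - n2\<bar> \<le> Cc / real N"
    and n1: "0 \<le> n1" "n1 \<le> 1" and n2: "0 \<le> n2" "n2 \<le> 1"
  shows "\<bar>real ((N - k) choose (N2 - t)) / real (N choose N1) - n1 ^ (k - t) * n2 ^ t\<bar>
     \<le> real k * ((2 * real k + Cc) / real N)"
proof -
  define g where "g i = (if i < t then real (N2 - i) else real (N1 - (i - t))) / real (N - i)" for i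
  define xx where "xx i = (if i < t then n2 else n1)" for i
  let ?A = "\<Prod>i<t. N2 - i" and ?B = "\<Prod>j<k-t. N1 - j" and ?P = "\<Prod>i<k. N - i"
  have kt: "k = t + (k - t)" using t by simp
  have num: "(\<Prod>i<k. (if i < t then real (N2 - i) else real (N1 - (i - t)))) = real (?A * ?B)"
  proof -
    have "(\<Prod>i<k. (if i < t then real (N2 - i) else real (N1 - (i - t))))
       = (\<Prod>i<t. (if i < t then real (N2 - i) else real (N1 - (i - t)))) *
         (\<Prod>j<k-t. (if t + j < t then real (N2 - (t + j)) else real (N1 - (t + j - t))))"
      by (subst kt, subst prod_split) simp
    also have "\<dots> = real ?A * real ?B" by (simp add: of_nat_prod)
    finally show ?thesis by simp
  qed
  have Ppos: "?P > 0" using kN Np by (intro prod_pos) auto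
  have gprod: "(\<Prod>i<k. g i) = real ((N - k) choose (N2 - t)) / real (N choose N1)"
  proof -
    have "(\<Prod>i<k. g i) = real (?A * ?B) / real ?P"
      unfolding g_def prod_dividef num by (simp add: of_nat_prod)
    also have "\<dots> = real ((N - k) choose (N2 - t)) / real (N choose N2)"
    proof -
      have e: "(N choose N2) * (?A * ?B) = ((N - k) choose (N2 - t)) * ?P"
        by (rule binom_ratio) (use k1 k2 t N_def in auto)
      have cpos: "(N choose N2) > 0" using N_def by simp
      have e': "real (?A * ?B) * real (N choose N2) = real ((N - k) choose (N2 - t)) * real ?P"
        by (metis e of_nat_mult mult.commute)
      have ne: "real (N choose N2) \<noteq> 0" "real ?P \<noteq> 0" using Ppos cpos by auto
      show ?thesis by (rule iffD2[OF frac_eq_eq[OF ne(2) ne(1)]]) (rule e')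
    qed
    also have "N choose N2 = N choose N1" using N_def binomial_symmetric[of N1 N] by simp
    finally show ?thesis .
  qed
  have xprod: "(\<Prod>i<k. xx i) = n1 ^ (k - t) * n2 ^ t"
    by (subst kt, subst prod_split) (simp add: xx_def)
  have bnd: "\<bar>g i\<bar> \<le> 1 \<and> \<bar>xx i\<bar> \<le> 1 \<and> \<bar>g i - xx i\<bar> \<le> (2 * real k + Cc) / real N" if i: "i < k" for i
  proof -
    have Ni: "real (N - i) = real N - real i" using i kN by simp
    have Nip: "real N - real i > 0" using i kN by simp
    show ?thesis
    proof (cases "i < t")
      case True
      have gi: "g i = (real N2 - real i) / (real N - real i)" using True t k2 i
        by (simp add: g_def Ni of_nat_diff)
      have "\<bar>g i - real N2 / real N\<bar> \<le> 2 * real k / real N"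
        unfolding gi by (rule ratio_bound) (use i kN Np N_def in auto)
      then have "\<bar>g i - xx i\<bar> \<le> (2 * real k + Cc) / real N"
        using c2 True by (simp add: xx_def add_divide_distrib; linarith?)
      moreover have "0 \<le> g i" "g i \<le> 1" unfolding gi using Nip True t k2 N_def
        by (auto simp: divide_le_eq_1)
      ultimately show ?thesis using n2 True by (simp add: xx_def)
    next
      case False
      have gi: "g i = (real N1 - real (i - t)) / (real N - real i)" using False t k1 i
        by (simp add: g_def Ni of_nat_diff)
      have "\<bar>g i - real N1 / real N\<bar> \<le> 2 * real k / real N"
        unfolding gi by (rule ratio_bound) (use i kN Np N_def False in auto)
      then have "\<bar>g i - xx i\<bar> \<le> (2 * real k + Cc) / real N"
        using c1 False by (simp add: xx_def add_divide_distrib; linarith?)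
      moreover have "0 \<le> g i" "g i \<le> 1" unfolding gi using Nip False t k1 k2 i N_def
        by (auto simp: divide_le_eq_1 of_nat_diff)
      ultimately show ?thesis using n1 False by (simp add: xx_def)
    qed
  qed
  have "\<bar>(\<Prod>i<k. g i) - (\<Prod>i<k. xx i)\<bar> \<le> real k * ((2 * real k + Cc) / real N)"
    by (rule prod_diff) (use bnd in blast)
  then show ?thesis unfolding gprod xprod .
qed


lemma finish_bound:
  fixes F :: "nat \<Rightarrow> real"
  assumes "\<And>N. N \<ge> Nz \<Longrightarrow> N \<ge> 2 \<Longrightarrow> N > k \<Longrightarrow> F N \<le> K / real N" and K: "K \<ge> 0"
  shows "\<exists>c>0. \<forall>N. N \<ge> 2 \<and> N > k \<longrightarrow> F N \<le> c / real N"
proof -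
  define S where "S = (\<Sum>M<Nz. \<bar>real M * F M\<bar>)"
  have S: "S \<ge> 0" unfolding S_def by (intro sum_nonneg) auto
  define c where "c = K + S + 1"
  have "c > 0" using K S by (simp add: c_def)
  moreover have "F N \<le> c / real N" if N: "N \<ge> 2" "N > k" for N
  proof (cases "N \<ge> Nz")
    case True
    then have "F N \<le> K / real N" using assms(1) N by blast
    also have "\<dots> \<le> c / real N" using N S by (intro divide_right_mono) (auto simp: c_def)
    finally show ?thesis .
  next
    case False
    then have "\<bar>real N * F N\<bar> \<le> S" unfolding S_def
      by (intro member_le_sum) auto
    then have "real N * F N \<le> c" using K by (simp add: c_def)
    moreover have "real N > 0" using N by simp
    ultimately show ?thesis by (simp add: field_simps)
  qed
  ultimately show ?thesis by blast
qed

lemma D_eq: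
  assumes kN: "k \<le> N1 + N2"
  shows "gamma_spin k N1 N2 - gamma_spin_inf k n1 n2 = mat (2 ^ k) (2 ^ k) (\<lambda>(r, s).
     if cntb k r = cntb k s then complex_of_real
       ((if cntb k r \<le> N2 then real ((N1 + N2 - k) choose (N2 - cntb k r)) / real ((N1 + N2) choose N1) else 0)
        - n1 ^ (k - cntb k r) * n2 ^ cntb k r) else 0)"
proof (rule eq_matI)
  fix r s assume "r < dim_row (mat (2 ^ k) (2 ^ k) (\<lambda>(r, s).
     if cntb k r = cntb k s then complex_of_real
       ((if cntb k r \<le> N2 then real ((N1 + N2 - k) choose (N2 - cntb k r)) / real ((N1 + N2) choose N1) else 0)
        - n1 ^ (k - cntb k r) * n2 ^ cntb k r) else 0))"
    "s < dim_col (mat (2 ^ k) (2 ^ k) (\<lambda>(r, s).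
     if cntb k r = cntb k s then complex_of_real
       ((if cntb k r \<le> N2 then real ((N1 + N2 - k) choose (N2 - cntb k r)) / real ((N1 + N2) choose N1) else 0)
        - n1 ^ (k - cntb k r) * n2 ^ cntb k r) else 0))"
  then have rs: "r < 2 ^ k" "s < 2 ^ k" by auto
  have d: "dim_row (gamma_spin_inf k n1 n2) = 2 ^ k" "dim_col (gamma_spin_inf k n1 n2) = 2 ^ k"
    by (simp_all add: gamma_spin_inf_def)
  show "(gamma_spin k N1 N2 - gamma_spin_inf k n1 n2) $$ (r, s) = mat (2 ^ k) (2 ^ k) (\<lambda>(r, s).
     if cntb k r = cntb k s then complex_of_real
       ((if cntb k r \<le> N2 then real ((N1 + N2 - k) choose (N2 - cntb k r)) / real ((N1 + N2) choose N1) else 0)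
        - n1 ^ (k - cntb k r) * n2 ^ cntb k r) else 0) $$ (r, s)"
    using rs d gamma_spin_nth[OF kN rs] gamma_spin_inf_nth[OF rs, of n1 n2]
    by (auto simp: of_real_diff)
qed (auto simp: gamma_spin_def gamma_spin_inf_def marginal_def)

theorem mainTheorem4:
  fixes n1 n2 :: real and N1 N2 :: "nat \<Rightarrow> nat"
  assumes "0 < n1" "n1 < 1" "0 < n2" "n2 < 1" "n1 + n2 = 1"
    and "\<And>N. N \<ge> 2 \<Longrightarrow> N1 N + N2 N = N"
    and "\<exists>C. \<forall>N\<ge>2. \<bar>real (N1 N) / real N - n1\<bar> \<le> C / real N"
    and "\<exists>C. \<forall>N\<ge>2. \<bar>real (N2 N) / real N - n2\<bar> \<le> C / real N"
  shows "\<forall>k::nat. \<exists>c>0. \<forall>N. N \<ge> 2 \<and> N > k \<longrightarrow>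
           trace_norm (gamma_spin k (N1 N) (N2 N) - gamma_spin_inf k n1 n2) \<le> c / real N"
proof (intro allI)
  fix k :: nat
  obtain C1 where C1: "\<forall>N\<ge>2. \<bar>real (N1 N) / real N - n1\<bar> \<le> C1 / real N" using assms(7) by blast
  obtain C2 where C2: "\<forall>N\<ge>2. \<bar>real (N2 N) / real N - n2\<bar> \<le> C2 / real N" using assms(8) by blast
  define Cc where "Cc = \<bar>C1\<bar> + \<bar>C2\<bar>"
  have Cc: "Cc \<ge> 0" by (simp add: Cc_def)
  define N0 where "N0 = 2 * k + 2 + nat \<lceil>(real k + Cc) / n1\<rceil> + nat \<lceil>(real k + Cc) / n2\<rceil>"
  define K where "K = 2 ^ k * (real k * (2 * real k + Cc))"
  have K: "K \<ge> 0" using Cc by (simp add: K_def)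
  show "\<exists>c>0. \<forall>N. N \<ge> 2 \<and> N > k \<longrightarrow>
           trace_norm (gamma_spin k (N1 N) (N2 N) - gamma_spin_inf k n1 n2) \<le> c / real N"
  proof (rule finish_bound[where F = "\<lambda>N. trace_norm (gamma_spin k (N1 N) (N2 N) - gamma_spin_inf k n1 n2)"
      and Nz = N0 and K = K, OF _ K])
    fix N assume N: "N \<ge> N0" "N \<ge> 2" "N > k"
    define a where "a = N1 N"
    define b where "b = N2 N"
    have ab: "a + b = N" using assms(6)[OF N(2)] by (simp add: a_def b_def)
    have Npos: "real N > 0" using N by simp
    have c1: "\<bar>real a / real N - n1\<bar> \<le> Cc / real N"
    proof -
      have "\<bar>real a / real N - n1\<bar> \<le> C1 / real N" using C1 N(2) by (simp add: a_def)
      also have "\<dots> \<le> Cc / real N" using Npos by (intro divide_right_mono) (auto simp: Cc_def)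
      finally show ?thesis .
    qed
    have c2: "\<bar>real b / real N - n2\<bar> \<le> Cc / real N"
    proof -
      have "\<bar>real b / real N - n2\<bar> \<le> C2 / real N" using C2 N(2) by (simp add: b_def)
      also have "\<dots> \<le> Cc / real N" using Npos by (intro divide_right_mono) (auto simp: Cc_def)
      finally show ?thesis .
    qed
    have low: "real x \<ge> real k" if cx: "\<bar>real x / real N - m\<bar> \<le> Cc / real N" and m: "m > 0"
      and Nm: "real N \<ge> (real k + Cc) / m" for x :: nat and m :: real
    proof -
      have h: "real x / real N \<ge> m - Cc / real N" using cx by linarith
      have "m * real N - Cc = (m - Cc / real N) * real N" using Npos by (simp add: field_simps)
      also have "\<dots> \<le> real x / real N * real N" using h Npos by (intro mult_right_mono) auto
      also have "\<dots> = real x" using Npos by simp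
      finally have "real x \<ge> m * real N - Cc" .
      moreover have "m * real N \<ge> real k + Cc" using Nm m by (simp add: field_simps)
      ultimately show ?thesis by linarith
    qed
    have N1b: "real N \<ge> (real k + Cc) / n1"
    proof -
      have "(real k + Cc) / n1 \<le> real (nat \<lceil>(real k + Cc) / n1\<rceil>)" by linarith
      also have "\<dots> \<le> real N"
      proof -
        have "nat \<lceil>(real k + Cc) / n1\<rceil> \<le> N" using N(1) unfolding N0_def by linarith
        then show ?thesis by (simp only: of_nat_le_iff)
      qed
      finally show ?thesis .
    qed
    have N2b: "real N \<ge> (real k + Cc) / n2"
    proof -
      have "(real k + Cc) / n2 \<le> real (nat \<lceil>(real k + Cc) / n2\<rceil>)" by linarith
      also have "\<dots> \<le> real N"
      proof -
        have "nat \<lceil>(real k + Cc) / n2\<rceil> \<le> N" using N(1) unfolding N0_def by linarith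
        then show ?thesis by (simp only: of_nat_le_iff)
      qed
      finally show ?thesis .
    qed
    have ka: "k \<le> a" using low[OF c1 assms(1) N1b] by simp
    have kb: "k \<le> b" using low[OF c2 assms(3) N2b] by simp
    have k2: "2 * k \<le> a + b" using N(1) ab by (simp add: N0_def)
    define \<delta> where "\<delta> t = (if t \<le> b then real ((a + b - k) choose (b - t)) / real ((a + b) choose a) else 0)
        - n1 ^ (k - t) * n2 ^ t" for t
    have kab: "k \<le> a + b" using ka by simp
    have "gamma_spin k a b - gamma_spin_inf k n1 n2 =
        mat (2 ^ k) (2 ^ k) (\<lambda>(r, s). if cntb k r = cntb k s then complex_of_real (\<delta> (cntb k r)) else 0)"
      unfolding D_eq[OF kab] \<delta>_def ..
    then have "trace_norm (gamma_spin k a b - gamma_spin_inf k n1 n2) = (\<Sum>r<2 ^ k. \<bar>\<delta> (cntb k r)\<bar>)"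
      using trace_norm_block[of "2 ^ k" "cntb k" k \<delta>] cntb_le by simp
    also have "\<dots> \<le> (\<Sum>r<(2::nat) ^ k. real k * ((2 * real k + Cc) / real N))"
    proof (rule sum_mono)
      fix r assume "r \<in> {..<(2::nat) ^ k}"
      have t: "cntb k r \<le> k" by (rule cntb_le)
      then have "cntb k r \<le> b" using kb by simp
      then have "\<delta> (cntb k r) = real ((a + b - k) choose (b - cntb k r)) / real ((a + b) choose a)
        - n1 ^ (k - cntb k r) * n2 ^ cntb k r" by (simp add: \<delta>_def)
      moreover have "\<bar>real ((a + b - k) choose (b - cntb k r)) / real ((a + b) choose a)
        - n1 ^ (k - cntb k r) * n2 ^ cntb k r\<bar> \<le> real k * ((2 * real k + Cc) / real (a + b))"
        by (rule est) (use ka kb k2 ab N t c1 c2 assms(1-4) in auto)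
      ultimately show "\<bar>\<delta> (cntb k r)\<bar> \<le> real k * ((2 * real k + Cc) / real N)" using ab by simp
    qed
    also have "\<dots> = K / real N" by (simp add: K_def)
    finally show "trace_norm (gamma_spin k (N1 N) (N2 N) - gamma_spin_inf k n1 n2) \<le> K / real N"
      by (simp add: a_def b_def)
  qed
qed

end
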